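(* Let $n$ be a positive integer and let $\mathbb{F}$ be a field with $\operatorname{char}(\mathbb{F})\neq 2$ and $|\mathbb{F}|\geq n^2+1$. Let $\Sigma_n$ denote the set of all $n\times n$ symmetric matrices over $\mathbb{F}$. Let $\psi:\Sigma_n\to\Sigma_n$ be a map, and let $\chi$ be a map from the set of all invertible matrices in $\Sigma_n$ into $\Sigma_n$. If $\operatorname{tr}(xy)=\operatorname{tr}(\chi(x)\psi(y))$ for every invertible $x\in\Sigma_n$ and every $y\in\Sigma_n$, then $\psi$ is linear. *)

theory Defs
  imports "HOL-Analysis.Analysis"
begin

definition symmetric_mat :: "'a::field^'n^'n \<Rightarrow> bool" where
  "symmetric_mat A \<longleftrightarrow> transpose A = A"

definition mat_scale :: "'a::field \<Rightarrow> 'a^'n^'n \<Rightarrow> 'a^'n^'n" where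
  "mat_scale c A = (\<chi> i j. c * A $ i $ j)"

end

theory Submission imports Defs begin


lemma trace_pairs:
  fixes x y :: "'a::comm_semiring_1^'n^'n"
  shows "trace (x ** y) = (\<Sum>p\<in>UNIV. x$fst p$snd p * y$snd p$fst p)"
proof -
  have "trace (x ** y) = (\<Sum>a\<in>UNIV. \<Sum>b\<in>UNIV. x$a$b * y$b$a)"
    by (simp add: trace_def matrix_matrix_mult_def)
  also have "\<dots> = (\<Sum>(a,b)\<in>UNIV \<times> UNIV. x$a$b * y$b$a)"
    by (simp add: sum.cartesian_product)
  also have "\<dots> = (\<Sum>p\<in>UNIV. x$fst p$snd p * y$snd p$fst p)"
    by (rule sum.cong) auto
  finally show ?thesis .
qed

lemma trace_sym_anti:
  fixes S A :: "'a::field^'n^'n"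
  assumes "(2::'a) \<noteq> 0" "symmetric_mat S" "transpose A = - A"
  shows "trace (S ** A) = 0"
proof -
  have s: "S$a$b = S$b$a" for a b
  proof -
    have "transpose S $ b $ a = S $ b $ a" using assms(2) unfolding symmetric_mat_def by simp
    then show ?thesis by (simp add: transpose_def)
  qed
  have an: "A$a$b = - A$b$a" for a b
  proof -
    have "transpose A $ b $ a = (- A) $ b $ a" using assms(3) by simp
    then show ?thesis by (simp add: transpose_def)
  qed
  let ?t = "(\<Sum>a\<in>UNIV. \<Sum>b\<in>UNIV. S$a$b * A$b$a)"
  have t: "trace (S ** A) = ?t"
    by (simp add: trace_def matrix_matrix_mult_def)
  have "?t = (\<Sum>a\<in>UNIV. \<Sum>b\<in>UNIV. - (S$b$a * A$a$b))"
  proof (intro sum.cong refl)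
    fix a b show "S$a$b * A$b$a = - (S$b$a * A$a$b)" using s[of a b] an[of b a] by simp
  qed
  also have "\<dots> = - (\<Sum>a\<in>UNIV. \<Sum>b\<in>UNIV. S$b$a * A$a$b)"
    by (simp only: sum_negf)
  also have "(\<Sum>a\<in>UNIV. \<Sum>b\<in>UNIV. S$b$a * A$a$b) = (\<Sum>b\<in>UNIV. \<Sum>a\<in>UNIV. S$b$a * A$a$b)"
    by (rule sum.swap)
  finally have "?t = - ?t" .
  then have "2 * ?t = 0" by (simp add: algebra_simps)
  then show ?thesis using t assms(1) by simp
qed

lemma trace_scale:
  fixes x y :: "'a::field^'n^'n"
  shows "trace (x ** mat_scale c y) = c * trace (x ** y)"
  by (simp add: trace_pairs mat_scale_def sum_distrib_left algebra_simps)

definition diagm :: "('n \<Rightarrow> 'a::field) \<Rightarrow> 'a^'n^'n" where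
  "diagm d = (\<chi> a b. if a = b then d a else 0)"

lemma diagm_mult: "diagm d ** diagm e = diagm (\<lambda>a. d a * e a)"
  by (simp add: diagm_def matrix_matrix_mult_def vec_eq_iff if_distrib[where f="\<lambda>u. u * _"] cong: if_cong)

lemma diagm_one: "diagm (\<lambda>a. 1) = mat 1"
  by (simp add: diagm_def mat_def vec_eq_iff)

lemma diagm_inv:
  assumes "\<And>a. d a \<noteq> 0" shows "invertible (diagm d)"
  unfolding invertible_def
  by (rule exI[of _ "diagm (\<lambda>a. inverse (d a))"]) (simp add: diagm_mult assms diagm_one)

lemma diagm_sym: "symmetric_mat (diagm d)"
  by (simp add: symmetric_mat_def diagm_def transpose_def vec_eq_iff)

definition sw :: "'n \<Rightarrow> 'n \<Rightarrow> 'n \<Rightarrow> 'n" where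
  "sw i j a = (if a = i then j else if a = j then i else a)"

definition permm :: "'n \<Rightarrow> 'n \<Rightarrow> 'a::field^'n^'n" where
  "permm i j = (\<chi> a b. if b = sw i j a then 1 else 0)"

lemma sw_sw: "sw i j (sw i j a) = a" by (simp add: sw_def)

lemma permm_sq: "permm i j ** permm i j = (mat 1 :: 'a::field^'n^'n)"
proof -
  have "(\<Sum>k\<in>UNIV. (if k = sw i j a then 1 else 0) * (if b = sw i j k then 1 else (0::'a)))
      = (if a = b then 1 else 0)" for a b
  proof -
    have "(\<Sum>k\<in>UNIV. (if k = sw i j a then 1 else 0) * (if b = sw i j k then 1 else (0::'a)))
       = (\<Sum>k\<in>UNIV. if k = sw i j a then (if b = sw i j k then 1 else (0::'a)) else 0)"
      by (rule sum.cong) auto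
    also have "\<dots> = (if b = sw i j (sw i j a) then 1 else 0)" by simp
    finally show ?thesis by (simp add: sw_sw eq_commute)
  qed
  then show ?thesis by (simp add: permm_def matrix_matrix_mult_def mat_def vec_eq_iff)
qed

lemma permm_inv: "invertible (permm i j :: 'a::field^'n^'n)"
  unfolding invertible_def using permm_sq by blast

lemma permm_sym: "symmetric_mat (permm i j :: 'a::field^'n^'n)"
  unfolding symmetric_mat_def permm_def transpose_def vec_eq_iff
  by (auto simp: sw_def)


lemma trace_addL: "trace ((A + B) ** (C::'a::field^'n^'n)) = trace (A ** C) + trace (B ** C)"
  by (simp add: trace_pairs sum.distrib algebra_simps)
lemma trace_addR: "trace (A ** (B + C::'a::field^'n^'n)) = trace (A ** B) + trace (A ** C)"
  by (simp add: trace_pairs sum.distrib algebra_simps)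
lemma trace_diffR: "trace (A ** (B - C::'a::field^'n^'n)) = trace (A ** B) - trace (A ** C)"
  by (simp add: trace_pairs sum_subtractf algebra_simps)

lemma trace_anti_sym:
  fixes S A :: "'a::field^'n^'n"
  assumes "(2::'a) \<noteq> 0" "symmetric_mat S" "transpose A = - A"
  shows "trace (A ** S) = 0"
proof -
  have "trace (A ** S) = trace (S ** A)" by (rule trace_mul_sym)
  then show ?thesis using trace_sym_anti[OF assms] by simp
qed

definition flat :: "'a^'n^'n \<Rightarrow> 'a^('n \<times> 'n)" where
  "flat A = (\<chi> q. A $ fst q $ snd q)"

lemma offdiag_entry:
  fixes i j a b :: 'n
  assumes "i \<noteq> j" "(2::'a::field) \<noteq> 0"
  shows "(if a = i \<and> b = j then 1 else 0) = inverse (2::'a) * ((if b = sw i j a then 1 else 0)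
     + ((if a = i \<and> b = j then 1 else 0) - (if a = j \<and> b = i then 1 else 0)) - (if a = b then 1 else 0)
     + (if a = i \<and> b = i then 1 else 0) + (if a = j \<and> b = j then 1 else 0))"
  using assms by (cases "a = i"; cases "a = j"; cases "b = i"; cases "b = j") (simp_all add: sw_def)

lemma claimC:
  fixes psi chi :: "'a::field^'n^'n \<Rightarrow> 'a^'n^'n"
  assumes char: "(2::'a) \<noteq> 0"
    and psi_maps: "\<And>y. symmetric_mat y \<Longrightarrow> symmetric_mat (psi y)"
    and chi_maps: "\<And>x. symmetric_mat x \<Longrightarrow> invertible x \<Longrightarrow> symmetric_mat (chi x)"
    and tr: "\<And>x y. symmetric_mat x \<Longrightarrow> invertible x \<Longrightarrow> symmetric_mat y \<Longrightarrow>
               trace (x ** y) = trace (chi x ** psi y)"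
    and z: "symmetric_mat z"
    and orth: "\<And>w. symmetric_mat w \<Longrightarrow> invertible w \<Longrightarrow> trace (chi w ** z) = 0"
  shows "z = 0"
proof -
  define h where "h y = mat_scale (inverse 2) (y + transpose y)" for y :: "'a^'n^'n"
  define k where "k y = mat_scale (inverse 2) (y - transpose y)" for y :: "'a^'n^'n"
  have hk: "h y + k y = y" for y
  proof -
    have "inverse 2 * (u + v) + inverse 2 * (u - v) = (u::'a)" for u v
      using char by (simp add: field_simps)
    then show ?thesis by (simp add: h_def k_def mat_scale_def vec_eq_iff)
  qed
  have hsym: "symmetric_mat (h y)" for y
    by (simp add: h_def symmetric_mat_def mat_scale_def transpose_def vec_eq_iff add.commute)
  have kanti: "transpose (k y) = - k y" for y
    by (simp add: k_def mat_scale_def transpose_def vec_eq_iff algebra_simps)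
  define psi' where "psi' y = psi (h y) + k y" for y
  have rel: "trace ((s + a) ** y) = trace ((chi s + a) ** psi' y)"
    if s: "symmetric_mat s" "invertible s" and a: "transpose a = - a" for s a y
  proof -
    have 1: "trace (s ** y) = trace (s ** h y)"
      using trace_addR[of s "h y" "k y"] trace_sym_anti[OF char s(1) kanti] hk by simp
    have 2: "trace (a ** y) = trace (a ** k y)"
      using trace_addR[of a "h y" "k y"] trace_anti_sym[OF char hsym a] hk by simp
    have 3: "trace (s ** h y) = trace (chi s ** psi (h y))" using tr s hsym by blast
    have 4: "trace (chi s ** psi' y) = trace (chi s ** psi (h y))"
      using trace_addR[of "chi s" "psi (h y)" "k y"] trace_sym_anti[OF char chi_maps[OF s] kanti]
      unfolding psi'_def by simp
    have 5: "trace (a ** psi' y) = trace (a ** k y)"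
      using trace_addR[of a "psi (h y)" "k y"] trace_anti_sym[OF char psi_maps[OF hsym] a]
      unfolding psi'_def by simp
    show ?thesis using 1 2 3 4 5 by (simp add: trace_addL)
  qed
  define i0 :: 'n where "i0 = undefined"
  define s :: "'n \<times> 'n \<Rightarrow> 'a^'n^'n" where "s p = (if fst p = snd p then diagm (\<lambda>a. if a = fst p \<and> fst p \<noteq> i0 then 2 else 1)
                      else permm (fst p) (snd p))" for p :: "'n \<times> 'n"
  define E where "E i j = (\<chi> a b. if a = i \<and> b = j then (1::'a) else 0)" for i j :: 'n
  define an where "an p = (if fst p = snd p then 0 else E (fst p) (snd p) - E (snd p) (fst p))" for p :: "'n \<times> 'n"
  define x where "x p = s p + an p" for p
  have s_sym: "symmetric_mat (s p)" for p
    by (simp add: s_def diagm_sym permm_sym)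
  have s_inv: "invertible (s p)" for p
    using char by (auto simp add: s_def permm_inv split: if_splits intro!: diagm_inv)
  have an_anti: "transpose (an p) = - an p" for p
    by (auto simp add: an_def E_def transpose_def vec_eq_iff)
  define X where "X = (\<chi> p. flat (x p))"
  define V where "V = vec.span (rows X)"
  have xV: "flat (x p) \<in> V" for p
    unfolding V_def rows_def
    by (rule vec.span_base) (auto simp: row_def X_def vec_lambda_eta, metis prod.collapse)
  define e where "e p = (axis p 1 :: 'a^('n\<times>'n))" for p
  define I' where "I' = flat (mat 1 :: 'a^'n^'n)"
  have IV: "I' \<in> V"
  proof -
    have "x (i0,i0) = mat 1" unfolding x_def s_def an_def
      by (simp add: diagm_one[symmetric])
    then show ?thesis using xV[of "(i0,i0)"] by (simp add: I'_def)
  qed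
  have eiV: "e (i,i) \<in> V" if "i \<noteq> i0" for i
  proof -
    have "e (i,i) = flat (x (i,i)) - I'"
      using that by (auto simp: e_def I'_def flat_def x_def s_def an_def diagm_def mat_def axis_def vec_eq_iff)
    then show ?thesis using xV IV unfolding V_def by (simp add: vec.span_diff)
  qed
  have ei0V: "e (i0,i0) \<in> V"
  proof -
    have "e (i0,i0) = I' - (\<Sum>i\<in>UNIV-{i0}. e (i,i))"
    unfolding vec_eq_iff proof
      fix q :: "'n \<times> 'n"
      obtain a b where q: "q = (a,b)" by force
      show "e (i0, i0) $ q = (I' - (\<Sum>i\<in>UNIV - {i0}. e (i, i))) $ q"
      proof (cases "a = b")
        case True
        have "(\<Sum>i\<in>UNIV - {i0}. e (i, i) $ q) = (\<Sum>i\<in>UNIV - {i0}. if a = i then 1 else 0)"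
          by (rule sum.cong) (auto simp: e_def axis_def q True)
        also have "\<dots> = (if a \<in> UNIV - {i0} then 1 else 0)" by (simp add: sum.delta)
        finally show ?thesis using True by (auto simp: e_def axis_def q I'_def flat_def mat_def sum_component)
      next
        case False
        have "(\<Sum>i\<in>UNIV - {i0}. e (i, i) $ q) = 0"
          by (rule sum.neutral) (use \<open>a \<noteq> b\<close> in \<open>auto simp: e_def axis_def q\<close>)
        then show ?thesis using False by (auto simp: e_def axis_def q I'_def flat_def mat_def sum_component)
      qed
    qed
    then show ?thesis using eiV IV unfolding V_def
      by (auto intro!: vec.span_diff vec.span_sum)
  qed
  have eddV: "e (i,i) \<in> V" for i using eiV ei0V by (cases "i = i0") auto
  have eV: "e p \<in> V" for p
  proof (cases "fst p = snd p")
    case True then show ?thesis using eddV[of "fst p"] by (metis prod.collapse)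
  next
    case False
    obtain i j where p: "p = (i,j)" by force
    with False have ij: "i \<noteq> j" by simp
    have xij: "x (i,j) = permm i j + (E i j - E j i)" using ij by (simp add: x_def s_def an_def)
    have "e (i,j) = inverse 2 *s (flat (x (i,j)) - I' + e (i,i) + e (j,j))"
      unfolding vec_eq_iff
    proof
      fix q :: "'n \<times> 'n"
      obtain a b where q: "q = (a,b)" by force
      show "e (i,j) $ q = (inverse 2 *s (flat (x (i,j)) - I' + e (i,i) + e (j,j))) $ q"
        unfolding q xij
        by (simp only: vector_smult_component vector_add_component vector_minus_component
            e_def I'_def flat_def permm_def E_def mat_def axis_def vec_lambda_beta fst_conv snd_conv
            offdiag_entry[OF ij char, of a b, symmetric] prod.inject)
    qed
    then show ?thesis unfolding p using xV IV eddV unfolding V_def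
      by (metis vec.span_add vec.span_diff vec.span_scale)
  qed
  have spanX: "vec.span (rows X) = UNIV"
  proof -
    have "cart_basis \<subseteq> V" using eV by (auto simp: cart_basis_def e_def)
    then have "vec.span cart_basis \<subseteq> V" unfolding V_def by (rule vec.span_minimal) simp
    then show ?thesis by (auto simp: V_def)
  qed
  obtain B where "B ** X = mat 1" using spanX matrix_left_invertible_span_rows_gen by blast
  then have XB: "X ** B = mat 1" using matrix_left_right_inverse by blast
  define y where "y l = (\<chi> b a. B $ (a,b) $ l)" for l :: "'n \<times> 'n"
  have trxy: "trace (x p ** y l) = (X ** B) $ p $ l" for p l
    unfolding trace_pairs by (simp add: matrix_matrix_mult_def X_def flat_def y_def)
  define c where "c p = chi (s p) + an p" for p
  define P where "P = (\<chi> p. flat (c p))"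
  define Q where "Q = (\<chi> q l. psi' (y l) $ snd q $ fst q)"
  have "P ** Q = X ** B"
  proof -
    have "(P ** Q) $ p $ l = trace (c p ** psi' (y l))" for p l
      unfolding trace_pairs by (simp add: matrix_matrix_mult_def P_def Q_def flat_def)
    also have "trace (c p ** psi' (y l)) = trace (x p ** y l)" for p l
      unfolding c_def x_def using rel[OF s_sym s_inv an_anti] by simp
    finally show ?thesis using trxy by (simp add: vec_eq_iff)
  qed
  with XB have QP: "Q ** P = mat 1" using matrix_left_right_inverse by metis
  define v where "v = (\<chi> q. z $ snd q $ fst q)"
  have "(P *v v) $ p = 0" for p
  proof -
    have "(P *v v) $ p = trace (c p ** z)"
      unfolding trace_pairs by (simp add: matrix_vector_mult_def P_def v_def flat_def)
    also have "\<dots> = trace (chi (s p) ** z) + trace (an p ** z)"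
      by (simp add: c_def trace_addL)
    also have "\<dots> = 0"
      using orth[OF s_sym s_inv] trace_anti_sym[OF char z an_anti] by simp
    finally show ?thesis .
  qed
  then have "P *v v = 0" by (simp add: vec_eq_iff)
  then have "v = 0"
    by (metis QP matrix_vector_mul_assoc matrix_vector_mul_lid matrix_vector_mult_0_right)
  then show ?thesis
    unfolding v_def by (simp add: vec_eq_iff)
qed


lemma sym_add: "symmetric_mat A \<Longrightarrow> symmetric_mat B \<Longrightarrow> symmetric_mat (A + (B::'a::field^'n^'n))"
  by (simp add: symmetric_mat_def transpose_def vec_eq_iff)
lemma sym_diff: "symmetric_mat A \<Longrightarrow> symmetric_mat B \<Longrightarrow> symmetric_mat (A - (B::'a::field^'n^'n))"
  by (simp add: symmetric_mat_def transpose_def vec_eq_iff)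
lemma sym_scale: "symmetric_mat A \<Longrightarrow> symmetric_mat (mat_scale c (A::'a::field^'n^'n))"
  by (simp add: symmetric_mat_def transpose_def vec_eq_iff mat_scale_def)

theorem lemma2p2:
  fixes psi chi :: "'a::field^'n^'n \<Rightarrow> 'a^'n^'n"
  assumes char: "(2::'a) \<noteq> 0"
    and card: "infinite (UNIV::'a set) \<or> card (UNIV::'a set) \<ge> CARD('n)^2 + 1"
    and psi_maps: "\<And>y. symmetric_mat y \<Longrightarrow> symmetric_mat (psi y)"
    and chi_maps: "\<And>x. symmetric_mat x \<Longrightarrow> invertible x \<Longrightarrow> symmetric_mat (chi x)"
    and tr: "\<And>x y. symmetric_mat x \<Longrightarrow> invertible x \<Longrightarrow> symmetric_mat y \<Longrightarrow>
               trace (x ** y) = trace (chi x ** psi y)"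
  shows "(\<forall>x y. symmetric_mat x \<longrightarrow> symmetric_mat y \<longrightarrow> psi (x + y) = psi x + psi y) \<and>
         (\<forall>c x. symmetric_mat x \<longrightarrow> psi (mat_scale c x) = mat_scale c (psi x))"
proof (intro conjI allI impI)
  fix x y :: "'a^'n^'n" assume x: "symmetric_mat x" and y: "symmetric_mat y"
  let ?z = "psi (x + y) - psi x - psi y"
  have "?z = 0"
  proof (rule claimC[OF char psi_maps chi_maps tr])
    show "symmetric_mat ?z" using x y by (intro sym_diff sym_add psi_maps) auto
    fix w :: "'a^'n^'n" assume w: "symmetric_mat w" "invertible w"
    have "trace (chi w ** ?z) = trace (w ** (x + y)) - trace (w ** x) - trace (w ** y)"
      using tr[OF w] x y sym_add[OF x y] by (simp add: trace_diffR)
    also have "\<dots> = 0" by (simp add: trace_addR)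
    finally show "trace (chi w ** ?z) = 0" .
  qed auto
  then show "psi (x + y) = psi x + psi y" by (simp add: algebra_simps)
next
  fix c and x :: "'a^'n^'n" assume x: "symmetric_mat x"
  let ?z = "psi (mat_scale c x) - mat_scale c (psi x)"
  have "?z = 0"
  proof (rule claimC[OF char psi_maps chi_maps tr])
    show "symmetric_mat ?z" using x by (intro sym_diff sym_scale psi_maps) auto
    fix w :: "'a^'n^'n" assume w: "symmetric_mat w" "invertible w"
    have "trace (chi w ** ?z) = trace (w ** mat_scale c x) - c * trace (w ** x)"
      using tr[OF w x] tr[OF w sym_scale[OF x, of c]] by (simp add: trace_diffR trace_scale)
    also have "\<dots> = 0" by (simp add: trace_scale)
    finally show "trace (chi w ** ?z) = 0" .
  qed auto
  then show "psi (mat_scale c x) = mat_scale c (psi x)" by (simp add: algebra_simps)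
qed

end
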